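(* Let $k,m,t$ be positive integers with $m+t\le k$ and $q$ a prime power. Let $B$ be the bipartite graph with left vertices the $t$-dimensional subspaces $V$ of $\mathbb{F}_q^k$, right vertices the $(m+t)$-dimensional subspaces $X$ of $\mathbb{F}_q^k$, and $V$ adjacent to $X$ iff $V\subseteq X$. For every $(m+t)$-dimensional subspace $X$ fix a bijection $V\mapsto T_{V,X}$ from the $t$-dimensional subspaces of $X$ onto the $m$-dimensional subspaces of $X$ such that $T_{V,X}\oplus V=X$ for every such $V$. For an $m$-dimensional subspace $T$ of $\mathbb{F}_q^k$ let $\mathcal{C}_T=\{\{V,X\}\in E(B): T_{V,X}=T\}$. Then $\mathcal{C}_T$ is an induced matching of $B$ of size $\binom{k-m}{t}_q$.
   Context: $\binom{a}{b}_q$ denotes the Gaussian binomial coefficient (number of $b$-dimensional subspaces of $\mathbb{F}_q^a$). An induced matching of a bipartite graph $B$ is a set $\mathcal{C}\subseteq E(B)$ such that for any two distinct $\{k_1,f_1\},\{k_2,f_2\}\in\mathcal{C}$: $k_1\ne k_2$, $f_1\ne f_2$, and $\{k_1,f_2\},\{k_2,f_1\}\notin E(B)$. *)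

theory Defs
  imports "HOL-Analysis.Analysis"
begin

text \<open>Gaussian binomial coefficient via the standard product formula
  (this is exactly the number of b-dimensional subspaces of F_q^a).\<close>
definition gauss_binom :: "nat \<Rightarrow> nat \<Rightarrow> nat \<Rightarrow> nat" where
  "gauss_binom q a b =
     (if b \<le> a then (\<Prod>i<b. (q ^ a - q ^ i)) div (\<Prod>i<b. (q ^ b - q ^ i)) else 0)"

definition subspaces_of_dim :: "nat \<Rightarrow> ('a::field ^ 'n) set set" where
  "subspaces_of_dim d = {W. vec.subspace W \<and> vec.dim W = d}"

definition bip_edges :: "'l set \<Rightarrow> 'r set \<Rightarrow> ('l \<Rightarrow> 'r \<Rightarrow> bool) \<Rightarrow> ('l \<times> 'r) set" where
  "bip_edges L R E = {(l, r). l \<in> L \<and> r \<in> R \<and> E l r}"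

definition induced_matching ::
  "'l set \<Rightarrow> 'r set \<Rightarrow> ('l \<Rightarrow> 'r \<Rightarrow> bool) \<Rightarrow> ('l \<times> 'r) set \<Rightarrow> bool" where
  "induced_matching L R E C \<longleftrightarrow>
     C \<subseteq> bip_edges L R E \<and>
     (\<forall>(k1, f1) \<in> C. \<forall>(k2, f2) \<in> C. (k1, f1) \<noteq> (k2, f2) \<longrightarrow>
        k1 \<noteq> k2 \<and> f1 \<noteq> f2 \<and>
        (k1, f2) \<notin> bip_edges L R E \<and> (k2, f1) \<notin> bip_edges L R E)"

end

theory Submission
  imports Defs
begin


lemma card_span_indep:
  fixes B :: "('a::{finite,field} ^ 'n) set"
  assumes "vec.independent B"
  shows "card (vec.span B) = CARD('a) ^ card B"
proof -
  have "finite B" by simp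
  then show ?thesis using assms
  proof (induction B rule: finite_induct)
    case empty
    then show ?case by simp
  next
    case (insert v B)
    have indB: "vec.independent B" using insert.prems vec.independent_mono by blast
    have vnot: "v \<notin> vec.span B"
      using insert.prems insert.hyps(2) vec.independent_insert by (metis)
    let ?f = "\<lambda>(c, w). c *s v + w"
    have inj: "inj_on ?f (UNIV \<times> vec.span B)"
    proof (rule inj_onI, clarsimp)
      fix c w c' w'
      assume w: "w \<in> vec.span B" and w': "w' \<in> vec.span B" and eq: "c *s v + w = c' *s v + w'"
      have "(c - c') *s v = w' - w" using eq
        by (simp add: vec.scale_left_diff_distrib algebra_simps)
      hence inS: "(c - c') *s v \<in> vec.span B" using w w' vec.span_diff by metis
      show "c = c' \<and> w = w'"
      proof (cases "c = c'")
        case True then show ?thesis using eq by simp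
      next
        case False
        then have "v \<in> vec.span B"
        proof -
          have "inverse (c - c') *s ((c - c') *s v) = v"
            using False by (simp only: vector_smult_assoc) simp
          then show ?thesis using vec.span_scale[OF inS, of "inverse (c - c')"] by simp
        qed
        then show ?thesis using vnot by blast
      qed
    qed
    have img: "?f ` (UNIV \<times> vec.span B) = vec.span (insert v B)"
    proof
      show "?f ` (UNIV \<times> vec.span B) \<subseteq> vec.span (insert v B)"
      proof (clarsimp simp: vec.span_insert)
        fix a b assume "b \<in> vec.span B"
        then show "\<exists>k. a *s v + b - k *s v \<in> vec.span B"
          by (rule_tac x=a in exI) simp
      qed
    next
      show "vec.span (insert v B) \<subseteq> ?f ` (UNIV \<times> vec.span B)"
      proof
        fix x assume "x \<in> vec.span (insert v B)"
        then obtain c where "x - c *s v \<in> vec.span B" by (auto simp: vec.span_insert)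
        then show "x \<in> ?f ` (UNIV \<times> vec.span B)"
          by (rule_tac image_eqI[where x="(c, x - c *s v)"]) auto
      qed
    qed
    have "card (vec.span (insert v B)) = card ((UNIV::'a set) \<times> vec.span B)"
      using card_image[OF inj] img by simp
    also have "\<dots> = CARD('a) * CARD('a) ^ card B" using insert.IH indB by (simp add: card_cartesian_product)
    finally show ?case using insert.hyps by simp
  qed
qed

lemma card_subspace:
  fixes S :: "('a::{finite,field} ^ 'n) set"
  assumes "vec.subspace S"
  shows "card S = CARD('a) ^ vec.dim S"
proof -
  obtain B where B: "B \<subseteq> S" "vec.independent B" "S \<subseteq> vec.span B" "card B = vec.dim S"
    using vec.basis_exists[of S] by blast
  have "vec.span B = S" using B assms vec.span_subspace by blast
  then show ?thesis using card_span_indep[OF B(2)] B(4) by simp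
qed



fun okx :: "('a::field ^ 'n) set \<Rightarrow> ('a ^ 'n) list \<Rightarrow> bool" where
  "okx S [] = True"
| "okx S (v # vs) = (v \<notin> S \<and> okx (vec.span (insert v S)) vs)"

lemma okx_dim:
  fixes S :: "('a::{finite,field} ^ 'n) set"
  assumes "vec.subspace S" "okx S vs"
  shows "vec.dim (vec.span (S \<union> set vs)) = vec.dim S + length vs"
  using assms
proof (induction vs arbitrary: S)
  case Nil
  then show ?case by simp
next
  case (Cons v vs)
  let ?S' = "vec.span (insert v S)"
  have sub: "vec.subspace ?S'" by (rule vec.subspace_span)
  have IH: "vec.dim (vec.span (?S' \<union> set vs)) = vec.dim ?S' + length vs"
    using Cons by simp
  have spS: "vec.span S = S" using Cons.prems(1) vec.span_eq_iff by blast
  have "v \<notin> S" using Cons.prems(2) by simp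
  then have vS: "v \<notin> vec.span S" using spS by metis
  have h1: "insert v S \<subseteq> S \<union> set (v # vs)" by auto
  have h2: "set vs \<subseteq> S \<union> set (v # vs)" by auto
  have h3: "S \<union> set (v # vs) \<subseteq> ?S' \<union> set vs"
    using vec.span_superset[of "insert v S"] by auto
  have "vec.span (?S' \<union> set vs) = vec.span (S \<union> set (v # vs))"
  proof (rule vec.span_eq[THEN iffD2], rule conjI)
    have "?S' \<subseteq> vec.span (S \<union> set (v # vs))" by (rule vec.span_mono[OF h1])
    moreover have "set vs \<subseteq> vec.span (S \<union> set (v # vs))"
      by (rule subset_trans[OF h2 vec.span_superset])
    ultimately show "?S' \<union> set vs \<subseteq> vec.span (S \<union> set (v # vs))" by (rule Un_least)
    show "S \<union> set (v # vs) \<subseteq> vec.span (?S' \<union> set vs)"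
      by (rule subset_trans[OF h3 vec.span_superset])
  qed
  moreover have "vec.dim ?S' = vec.dim S + 1"
    using vS by (simp only: vec.dim_span vec.dim_insert if_False)
  ultimately show ?case using IH by simp
qed

lemma okx_count:
  fixes S Y :: "('a::{finite,field} ^ 'n) set"
  assumes "vec.subspace S" "vec.subspace Y" "S \<subseteq> Y" "vec.dim S + j \<le> vec.dim Y"
  shows "card {vs. length vs = j \<and> set vs \<subseteq> Y \<and> okx S vs}
         = (\<Prod>i<j. CARD('a) ^ vec.dim Y - CARD('a) ^ (vec.dim S + i))"
  using assms
proof (induction j arbitrary: S)
  case 0
  have "{vs. length vs = 0 \<and> set vs \<subseteq> Y \<and> okx S vs} = {[]}" by auto
  then show ?case by simp
next
  case (Suc j)
  let ?A = "\<lambda>S. {vs. length vs = j \<and> set vs \<subseteq> Y \<and> okx S vs}"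
  let ?q = "CARD('a)"
  have eq: "{vs. length vs = Suc j \<and> set vs \<subseteq> Y \<and> okx S vs}
        = (\<Union>v\<in>Y - S. (#) v ` ?A (vec.span (insert v S)))"
    by (auto simp: length_Suc_conv)
  have each: "card ((#) v ` ?A (vec.span (insert v S)))
      = (\<Prod>i<j. ?q ^ vec.dim Y - ?q ^ (vec.dim S + Suc i))" if v: "v \<in> Y - S" for v
  proof -
    have d: "vec.dim (vec.span (insert v S)) = vec.dim S + 1"
    proof -
      have spS: "vec.span S = S" using Suc.prems(1) vec.span_eq_iff by blast
      have "v \<notin> S" using v by simp
      then have vS: "v \<notin> vec.span S" using spS by metis
      then show ?thesis by (simp only: vec.dim_span vec.dim_insert if_False)
    qed
    have "card ((#) v ` ?A (vec.span (insert v S))) = card (?A (vec.span (insert v S)))"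
      by (rule card_image) (simp add: inj_on_def)
    also have "\<dots> = (\<Prod>i<j. ?q ^ vec.dim Y - ?q ^ (vec.dim (vec.span (insert v S)) + i))"
      apply (rule Suc.IH)
      using Suc.prems v d vec.span_minimal[of "insert v S" Y] by (auto intro: vec.subspace_span)
    finally show ?thesis using d by simp
  qed
  have "card {vs. length vs = Suc j \<and> set vs \<subseteq> Y \<and> okx S vs}
      = (\<Sum>v\<in>Y - S. card ((#) v ` ?A (vec.span (insert v S))))"
    unfolding eq
  proof (rule card_UN_disjoint)
    show "finite (Y - S)" by simp
    show "\<forall>v\<in>Y - S. finite ((#) v ` ?A (vec.span (insert v S)))"
    proof
      fix v
      have "?A (vec.span (insert v S)) \<subseteq> {xs. set xs \<subseteq> UNIV \<and> length xs = j}" by auto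
      then have "finite (?A (vec.span (insert v S)))"
        by (rule finite_subset) (rule finite_lists_length_eq, simp)
      then show "finite ((#) v ` ?A (vec.span (insert v S)))" by (rule finite_imageI)
    qed
    show "\<forall>v\<in>Y - S. \<forall>w\<in>Y - S. v \<noteq> w \<longrightarrow>
       (#) v ` ?A (vec.span (insert v S)) \<inter> (#) w ` ?A (vec.span (insert w S)) = {}"
      by blast
  qed
  also have "\<dots> = card (Y - S) * (\<Prod>i<j. ?q ^ vec.dim Y - ?q ^ (vec.dim S + Suc i))"
    using each by simp
  also have "card (Y - S) = ?q ^ vec.dim Y - ?q ^ vec.dim S"
  proof -
    have "card (Y - S) = card Y - card S" by (rule card_Diff_subset) (simp, rule Suc.prems(3))
    then show ?thesis using card_subspace[OF Suc.prems(1)] card_subspace[OF Suc.prems(2)] by simp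
  qed
  finally show ?case by (simp only: prod.lessThan_Suc_shift add_0_right)
qed



lemma gauss_arith:
  fixes q k m t N :: nat
  assumes q: "2 \<le> q" and mt: "m + t \<le> k"
    and eq: "N * (\<Prod>i<t. q ^ (m + t) - q ^ (m + i)) = (\<Prod>i<t. q ^ k - q ^ (m + i))"
  shows "gauss_binom q (k - m) t = N"
proof -
  have f: "q ^ (m + a) - q ^ (m + i) = q ^ m * (q ^ a - q ^ i)" for a i
    by (simp add: power_add diff_mult_distrib2)
  have k: "k = m + (k - m)" using mt by simp
  have P: "(\<Prod>i<t. q ^ k - q ^ (m + i)) = q ^ (m * t) * (\<Prod>i<t. q ^ (k - m) - q ^ i)"
    apply (subst k) apply (subst f)
    by (simp add: prod.distrib power_mult)
  have D: "(\<Prod>i<t. q ^ (m + t) - q ^ (m + i)) = q ^ (m * t) * (\<Prod>i<t. q ^ t - q ^ i)"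
    apply (subst f)
    by (simp add: prod.distrib power_mult)
  have pos: "q ^ (m * t) > 0" using q by simp
  have eq2: "N * (\<Prod>i<t. q ^ t - q ^ i) = (\<Prod>i<t. q ^ (k - m) - q ^ i)"
    using eq unfolding P D using pos by (metis mult.left_commute mult_left_cancel neq0_conv)
  have Dpos: "(\<Prod>i<t. q ^ t - q ^ i) > 0"
  proof (rule prod_pos, clarsimp)
    fix i assume "i < t"
    then show "q ^ i < q ^ t" using q by (simp add: power_strict_increasing)
  qed
  have "t \<le> k - m" using mt by simp
  then show ?thesis unfolding gauss_binom_def using eq2 Dpos
    by (metis nonzero_mult_div_cancel_right not_less0)
qed



lemma count_super:
  fixes T :: "('a::{finite,field} ^ 'n) set"
  assumes T: "T \<in> subspaces_of_dim m" and mt: "m + t \<le> CARD('n)"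
  shows "card {X \<in> subspaces_of_dim (m + t). T \<subseteq> X} = gauss_binom CARD('a) (CARD('n) - m) t"
proof -
  let ?q = "CARD('a)"
  let ?Xs = "{X \<in> subspaces_of_dim (m + t). T \<subseteq> X}"
  let ?L = "{vs. length vs = t \<and> set vs \<subseteq> (UNIV :: ('a ^ 'n) set) \<and> okx T vs}"
  let ?g = "\<lambda>vs. vec.span (T \<union> set vs)"
  have Ts: "vec.subspace T" "vec.dim T = m" using T by (auto simp: subspaces_of_dim_def)
  have dU: "vec.dim (UNIV :: ('a ^ 'n) set) = CARD('n)"
    by (simp add: vec.dim_UNIV card_cart_basis)
  have cL: "card ?L = (\<Prod>i<t. ?q ^ CARD('n) - ?q ^ (m + i))"
    using okx_count[of T UNIV t] Ts dU mt by (simp add: vec.subspace_UNIV)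
  have fib: "{vs \<in> ?L. ?g vs = X} = {vs. length vs = t \<and> set vs \<subseteq> X \<and> okx T vs}"
    if X: "X \<in> ?Xs" for X
  proof -
    have Xs: "vec.subspace X" "vec.dim X = m + t" "T \<subseteq> X" using X by (auto simp: subspaces_of_dim_def)
    show ?thesis
    proof (intro equalityI subsetI)
      fix vs assume "vs \<in> {vs \<in> ?L. ?g vs = X}"
      then show "vs \<in> {vs. length vs = t \<and> set vs \<subseteq> X \<and> okx T vs}"
        using vec.span_superset[of "T \<union> set vs"] by auto
    next
      fix vs assume vs: "vs \<in> {vs. length vs = t \<and> set vs \<subseteq> X \<and> okx T vs}"
      have sub: "?g vs \<subseteq> X" using vs Xs vec.span_minimal[of "T \<union> set vs" X] by auto
      have "vec.dim (?g vs) = m + t" using okx_dim[of T vs] Ts vs by simp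
      then have "?g vs = X"
        using vec.subspace_dim_equal[OF vec.subspace_span Xs(1) sub] Xs by simp
      then show "vs \<in> {vs \<in> ?L. ?g vs = X}" using vs by simp
    qed
  qed
  have cfib: "card {vs \<in> ?L. ?g vs = X} = (\<Prod>i<t. ?q ^ (m + t) - ?q ^ (m + i))"
    if X: "X \<in> ?Xs" for X
  proof -
    have Xs: "vec.subspace X" "vec.dim X = m + t" "T \<subseteq> X" using X by (auto simp: subspaces_of_dim_def)
    show ?thesis unfolding fib[OF X] using okx_count[of T X t] Ts Xs by simp
  qed
  have Lun: "?L = (\<Union>X\<in>?Xs. {vs \<in> ?L. ?g vs = X})"
  proof (intro equalityI subsetI)
    fix vs assume vs: "vs \<in> ?L"
    have "?g vs \<in> ?Xs"
      using okx_dim[of T vs] Ts vs vec.span_superset[of "T \<union> set vs"]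
      by (auto simp: subspaces_of_dim_def vec.subspace_span)
    then show "vs \<in> (\<Union>X\<in>?Xs. {vs \<in> ?L. ?g vs = X})" using vs by blast
  qed auto
  have "card ?L = (\<Sum>X\<in>?Xs. card {vs \<in> ?L. ?g vs = X})"
  proof -
    have "?L \<subseteq> {xs. set xs \<subseteq> UNIV \<and> length xs = t}" by auto
    then have fL: "finite ?L" by (rule finite_subset) (rule finite_lists_length_eq, simp)
    have "card (\<Union>X\<in>?Xs. {vs \<in> ?L. ?g vs = X}) = (\<Sum>X\<in>?Xs. card {vs \<in> ?L. ?g vs = X})"
    proof (rule card_UN_disjoint)
      show "finite ?Xs" by simp
      show "\<forall>X\<in>?Xs. finite {vs \<in> ?L. ?g vs = X}"
      proof
        fix X show "finite {vs \<in> ?L. ?g vs = X}" by (rule finite_subset[OF _ fL]) blast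
      qed
      show "\<forall>X\<in>?Xs. \<forall>Y\<in>?Xs. X \<noteq> Y \<longrightarrow> {vs \<in> ?L. ?g vs = X} \<inter> {vs \<in> ?L. ?g vs = Y} = {}"
        by blast
    qed
    then show ?thesis by (rule trans[OF arg_cong[where f=card, OF Lun]])
  qed
  also have "\<dots> = (\<Sum>X\<in>?Xs. (\<Prod>i<t. ?q ^ (m + t) - ?q ^ (m + i)))"
    by (rule sum.cong[OF refl cfib])
  also have "\<dots> = card ?Xs * (\<Prod>i<t. ?q ^ (m + t) - ?q ^ (m + i))"
    by (simp only: sum_constant of_nat_id)
  finally have c: "card ?L = card ?Xs * (\<Prod>i<t. ?q ^ (m + t) - ?q ^ (m + i))" .
  have c2: "card ?Xs * (\<Prod>i<t. ?q ^ (m + t) - ?q ^ (m + i)) = (\<Prod>i<t. ?q ^ CARD('n) - ?q ^ (m + i))"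
    by (rule trans[OF sym[OF c] cL])
  have q2: "2 \<le> ?q"
  proof -
    have "card {0::'a, 1} \<le> card (UNIV :: 'a set)" by (rule card_mono) simp_all
    then show ?thesis by simp
  qed
  show ?thesis by (rule sym, rule gauss_arith[OF q2 mt c2])
qed



theorem lemma6:
  fixes k m t :: nat
    and Tf :: "('a::{finite, field} ^ 'n) set \<Rightarrow> ('a ^ 'n) set \<Rightarrow> ('a ^ 'n) set"
    and T :: "('a ^ 'n) set"
  assumes "k = CARD('n)"
    and "0 < m" and "0 < t" and "m + t \<le> k"
    and bij: "\<And>X. X \<in> subspaces_of_dim (m + t) \<Longrightarrow>
        bij_betw (\<lambda>V. Tf V X) {V \<in> subspaces_of_dim t. V \<subseteq> X}
                               {W \<in> subspaces_of_dim m. W \<subseteq> X}"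
    and compl: "\<And>X V. X \<in> subspaces_of_dim (m + t) \<Longrightarrow> V \<in> subspaces_of_dim t \<Longrightarrow> V \<subseteq> X \<Longrightarrow>
        Tf V X \<inter> V = {0} \<and> {x + y | x y. x \<in> Tf V X \<and> y \<in> V} = X"
    and "T \<in> subspaces_of_dim m"
  shows "induced_matching (subspaces_of_dim t) (subspaces_of_dim (m + t)) (\<subseteq>)
           {(V, X) \<in> bip_edges (subspaces_of_dim t) (subspaces_of_dim (m + t)) (\<subseteq>). Tf V X = T}
       \<and> card {(V, X) \<in> bip_edges (subspaces_of_dim t) (subspaces_of_dim (m + t)) (\<subseteq>). Tf V X = T}
           = gauss_binom CARD('a) (k - m) t"
proof -
  let ?E = "bip_edges (subspaces_of_dim t) (subspaces_of_dim (m + t)) (\<subseteq>)"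
  let ?C = "{(V, X) \<in> ?E. Tf V X = T}"
  let ?Xs = "{X \<in> subspaces_of_dim (m + t). T \<subseteq> X}"
  have memE: "(V, X) \<in> ?E \<longleftrightarrow> V \<in> subspaces_of_dim t \<and> X \<in> subspaces_of_dim (m + t) \<and> V \<subseteq> X"
    for V X by (simp add: bip_edges_def)
  have memC: "(V, X) \<in> ?C \<longleftrightarrow> V \<in> subspaces_of_dim t \<and> X \<in> subspaces_of_dim (m + t) \<and> V \<subseteq> X \<and> Tf V X = T"
    for V X using memE[of V X] by simp
  have TX: "T \<subseteq> X" if c: "(V, X) \<in> ?C" for V X
  proof -
    have h: "V \<in> subspaces_of_dim t" "X \<in> subspaces_of_dim (m + t)" "V \<subseteq> X" "Tf V X = T"
      using c memC by blast+
    have "V \<in> {V \<in> subspaces_of_dim t. V \<subseteq> X}" using h by simp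
    then have "Tf V X \<in> {W \<in> subspaces_of_dim m. W \<subseteq> X}"
      by (rule bij_betwE[OF bij[OF h(2)], rule_format])
    then show ?thesis using h(4) by simp
  qed
  have key: "V1 = V2 \<and> X1 = X2" if c1: "(V1, X1) \<in> ?C" and c2: "(V2, X2) \<in> ?C" and sub: "V1 \<subseteq> X2"
    for V1 X1 V2 X2
  proof -
    have h1: "V1 \<in> subspaces_of_dim t" "X1 \<in> subspaces_of_dim (m + t)" "V1 \<subseteq> X1" "Tf V1 X1 = T"
      using c1 memC by blast+
    have h2: "V2 \<in> subspaces_of_dim t" "X2 \<in> subspaces_of_dim (m + t)" "V2 \<subseteq> X2" "Tf V2 X2 = T"
      using c2 memC by blast+
    have "Tf V1 X1 \<inter> V1 = {0} \<and> {x + y | x y. x \<in> Tf V1 X1 \<and> y \<in> V1} = X1"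
      by (rule compl[OF h1(2) h1(1) h1(3)])
    then have X1eq: "{x + y | x y. x \<in> T \<and> y \<in> V1} = X1" using h1(4) by simp
    have X2s: "vec.subspace X2" "vec.dim X2 = m + t" using h2(2) by (simp_all add: subspaces_of_dim_def)
    have X1s: "vec.subspace X1" "vec.dim X1 = m + t" using h1(2) by (simp_all add: subspaces_of_dim_def)
    have T2: "T \<subseteq> X2" by (rule TX[OF c2])
    have "X1 \<subseteq> X2"
    proof
      fix z assume "z \<in> X1"
      then obtain x y where z: "z = x + y" "x \<in> T" "y \<in> V1" using X1eq by blast
      have "x \<in> X2" "y \<in> X2" using z T2 sub by blast+
      then show "z \<in> X2" using z(1) vec.subspace_add[OF X2s(1)] by simp
    qed
    then have X: "X1 = X2" using vec.subspace_dim_equal[OF X1s(1) X2s(1)] X1s(2) X2s(2) by simp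
    have inj: "inj_on (\<lambda>V. Tf V X2) {V \<in> subspaces_of_dim t. V \<subseteq> X2}"
      using bij[OF h2(2)] by (simp add: bij_betw_def)
    have "V1 = V2"
    proof (rule inj_onD[OF inj])
      show "Tf V1 X2 = Tf V2 X2" using h1(4) h2(4) X by simp
      show "V1 \<in> {V \<in> subspaces_of_dim t. V \<subseteq> X2}" using h1(1) sub by simp
      show "V2 \<in> {V \<in> subspaces_of_dim t. V \<subseteq> X2}" using h2(1) h2(3) by simp
    qed
    then show ?thesis using X by simp
  qed
  have IM: "induced_matching (subspaces_of_dim t) (subspaces_of_dim (m + t)) (\<subseteq>) ?C"
    unfolding induced_matching_def
  proof (rule conjI)
    show "?C \<subseteq> ?E" by blast
    have main: "V1 \<noteq> V2 \<and> X1 \<noteq> X2 \<and> (V1, X2) \<notin> ?E \<and> (V2, X1) \<notin> ?E"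
      if c1: "(V1, X1) \<in> ?C" and c2: "(V2, X2) \<in> ?C" and ne: "(V1, X1) \<noteq> (V2, X2)"
      for V1 X1 V2 X2
    proof -
      have a: "\<not> V1 \<subseteq> X2" using key[OF c1 c2] ne by blast
      have b: "\<not> V2 \<subseteq> X1" using key[OF c2 c1] ne by blast
      have h1: "V1 \<subseteq> X1" using c1 memC by blast
      have h2: "V2 \<subseteq> X2" using c2 memC by blast
      show ?thesis using a b h1 h2 memE by blast
    qed
    show "\<forall>(k1, f1)\<in>?C. \<forall>(k2, f2)\<in>?C. (k1, f1) \<noteq> (k2, f2) \<longrightarrow>
        k1 \<noteq> k2 \<and> f1 \<noteq> f2 \<and> (k1, f2) \<notin> ?E \<and> (k2, f1) \<notin> ?E"
      using main by fast
  qed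
  have bb: "bij_betw snd ?C ?Xs"
  proof (rule bij_betw_imageI)
    show "inj_on snd ?C"
    proof (rule inj_onI)
      fix p1 p2 assume p1: "p1 \<in> ?C" and p2: "p2 \<in> ?C" and s: "snd p1 = snd p2"
      obtain V1 X1 where e1: "p1 = (V1, X1)" by fastforce
      obtain V2 X2 where e2: "p2 = (V2, X2)" by fastforce
      have c1: "(V1, X1) \<in> ?C" using p1 e1 by simp
      have c2: "(V2, X2) \<in> ?C" using p2 e2 by simp
      have "X1 = X2" using s e1 e2 by simp
      moreover have "V1 \<subseteq> X1" using c1 memC by blast
      ultimately have "V1 = V2 \<and> X1 = X2" using key[OF c1 c2] by simp
      then show "p1 = p2" using e1 e2 by simp
    qed
    show "snd ` ?C = ?Xs"
    proof (intro equalityI subsetI)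
      fix X assume "X \<in> snd ` ?C"
      then obtain V where c: "(V, X) \<in> ?C" by force
      have "X \<in> subspaces_of_dim (m + t)" using c memC by blast
      then show "X \<in> ?Xs" using TX[OF c] by simp
    next
      fix X assume X: "X \<in> ?Xs"
      then have Xd: "X \<in> subspaces_of_dim (m + t)" "T \<subseteq> X" by simp_all
      have "T \<in> {W \<in> subspaces_of_dim m. W \<subseteq> X}" using Xd(2) assms(7) by simp
      then have "T \<in> (\<lambda>V. Tf V X) ` {V \<in> subspaces_of_dim t. V \<subseteq> X}"
        using bij[OF Xd(1)] by (simp add: bij_betw_def)
      then obtain V where V: "V \<in> subspaces_of_dim t" "V \<subseteq> X" "Tf V X = T" by auto
      then have "(V, X) \<in> ?C" using Xd(1) memC by blast
      then show "X \<in> snd ` ?C" by (rule rev_image_eqI) simp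
    qed
  qed
  have "card ?C = card ?Xs" using bij_betw_same_card[OF bb] .
  also have "\<dots> = gauss_binom CARD('a) (k - m) t"
    using count_super[OF assms(7)] assms(1,4) by simp
  finally show ?thesis using IM by simp
qed

end
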